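(* Let $G$ be a finite abelian group with $|G|>1$ and let $p(G)$ be the smallest prime dividing $|G|$. If $B\subset G$ is balanced, then $|B|\geqslant\log_2 p(G)+1$.
   Context: A set $B\subset G$ is balanced if for every $b\in B$ there exist distinct $b_1,b_2\in B$ with $2b=b_1+b_2$. *)

theory Defs
  imports Complex_Main "HOL-Computational_Algebra.Primes"
begin

definition balanced :: "'a::ab_group_add set \<Rightarrow> bool" where
  "balanced B \<longleftrightarrow> (\<forall>b\<in>B. \<exists>b1\<in>B. \<exists>b2\<in>B. b1 \<noteq> b2 \<and> b + b = b1 + b2)"

definition smallest_prime_divisor :: "nat \<Rightarrow> nat" where
  "smallest_prime_divisor n = Min {p. prime p \<and> p dvd n}"

end

theory Submission
  imports Defs
begin

fun nsm :: "nat \<Rightarrow> 'a::ab_group_add \<Rightarrow> 'a" where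
  "nsm 0 y = 0" | "nsm (Suc n) y = y + nsm n y"

lemma nsm_add: "nsm (m + n) y = nsm m y + nsm n y"
  by (induction m) (auto simp: add.assoc)

lemma nsm_zero[simp]: "nsm n 0 = 0"
  by (induction n) auto

lemma nsm_mult: "nsm (m * n) y = nsm m (nsm n y)"
  by (induction m) (auto simp: nsm_add)

lemma nsm_two: "nsm 2 y = y + y"
  by (simp add: numeral_2_eq_2)

lemma nsm_sum_const: "finite A \<Longrightarrow> sum (\<lambda>_. y) A = nsm (card A) y"
  by (induction A rule: finite_induct) auto

lemma nsm_card:
  fixes y :: "'a::{ab_group_add,finite}"
  shows "nsm (card (UNIV::'a set)) y = 0"
proof -
  have "sum (\<lambda>x. x + y) (UNIV::'a set) = sum (\<lambda>x. x) UNIV"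
    by (rule sum.reindex_bij_witness[where i="\<lambda>x. x - y" and j="\<lambda>x. x + y"]) auto
  moreover have "sum (\<lambda>x. x + y) (UNIV::'a set) = sum (\<lambda>x. x) UNIV + nsm (card (UNIV::'a set)) y"
    by (simp add: sum.distrib nsm_sum_const)
  ultimately show ?thesis by simp
qed

lemma stabilize:
  fixes y :: "'b \<Rightarrow> 'a::ab_group_add" and wr :: "'b \<Rightarrow> nat"
  assumes fin: "finite A" and y_r: "y r = 0" and wr_r: "wr r = 0"
  and fire: "\<And>i. i \<in> A - {r} \<Longrightarrow> j i \<in> A \<and> k i \<in> A \<and> j i \<noteq> k i \<and> j i \<noteq> i \<and> k i \<noteq> i \<and> y i + y i = y (j i) + y (k i)"
  and wt: "\<And>i. i \<in> A - {r} \<Longrightarrow> wr (j i) + wr (k i) < 2 * wr i"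
  shows "(\<Sum>l\<in>A. nsm (z l) (y l)) \<in> (\<lambda>S. sum y S) ` Pow (A - {r})"
proof (induction "\<Sum>l\<in>A. z l * wr l" arbitrary: z rule: less_induct)
  case less
  show ?case
  proof (cases "\<forall>l\<in>A-{r}. z l \<le> 1")
    case True
    define S where "S = {l \<in> A - {r}. z l = 1}"
    have "(\<Sum>l\<in>A. nsm (z l) (y l)) = (\<Sum>l\<in>A. if l \<in> S then y l else 0)"
    proof (rule sum.cong)
      fix l assume l: "l \<in> A"
      show "nsm (z l) (y l) = (if l \<in> S then y l else 0)"
      proof (cases "l = r")
        case True then show ?thesis using y_r S_def by auto
      next
        case False
        then have "z l \<le> 1" using \<open>\<forall>l\<in>A-{r}. z l \<le> 1\<close> l by blast
        then have "z l = 0 \<or> z l = 1" by arith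
        then show ?thesis using False l S_def by auto
      qed
    qed simp
    also have "\<dots> = sum y S"
      using sum.inter_restrict[OF fin, of y S, symmetric] S_def by (simp add: Int_absorb1) 
    finally show ?thesis using S_def by auto
  next
    case False
    then obtain i where i: "i \<in> A - {r}" "z i \<ge> 2" by force
    note f = fire[OF i(1)]
    define z' where "z' = (\<lambda>l. if l = i then z l - 2 else if l = j i \<or> l = k i then z l + 1 else z l)"
    have e1: "nsm (z' l) (y l) + (if l = i then y i + y i else 0)
        = nsm (z l) (y l) + ((if l = j i then y (j i) else 0) + (if l = k i then y (k i) else 0))" for l
    proof -
      consider "l = i" | "l = j i" | "l = k i" | "l \<noteq> i \<and> l \<noteq> j i \<and> l \<noteq> k i" by blast
      then show ?thesis
      proof cases
        case 1
        have "z l = (z l - 2) + 2" using i 1 by simp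
        then have "nsm (z l) (y l) = nsm (z l - 2) (y l) + nsm 2 (y l)" by (metis nsm_add)
        moreover have "z' l = z l - 2" using 1 z'_def by simp
        moreover have "j i \<noteq> i" "k i \<noteq> i" using f by auto
        ultimately show ?thesis using 1 by (simp add: nsm_two)
      next
        case 2 then show ?thesis using f z'_def by (auto simp: add.commute)
      next
        case 3 then show ?thesis using f z'_def by (auto simp: add.commute)
      qed (auto simp: z'_def)
    qed
    have s1: "(\<Sum>l\<in>A. nsm (z' l) (y l) + (if l = i then y i + y i else 0))
        = (\<Sum>l\<in>A. nsm (z l) (y l) + ((if l = j i then y (j i) else 0) + (if l = k i then y (k i) else 0)))"
      using e1 by presburger
    have "(\<Sum>l\<in>A. nsm (z' l) (y l)) + (y i + y i) = (\<Sum>l\<in>A. nsm (z l) (y l)) + (y (j i) + y (k i))"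
      using s1 i f fin unfolding sum.distrib by (simp add: if_distrib cong: if_cong)
    then have val: "(\<Sum>l\<in>A. nsm (z' l) (y l)) = (\<Sum>l\<in>A. nsm (z l) (y l))" using f by simp
    have e2: "z' l * wr l + (if l = i then 2 * wr i else 0)
        = z l * wr l + ((if l = j i then wr (j i) else 0) + (if l = k i then wr (k i) else 0))" for l
    proof -
      consider "l = i" | "l = j i" | "l = k i" | "l \<noteq> i \<and> l \<noteq> j i \<and> l \<noteq> k i" by blast
      then show ?thesis
      proof cases
        case 1
        moreover have "z' l = z l - 2" using 1 z'_def by simp
        moreover have "i \<noteq> j i" "i \<noteq> k i" using f by auto
        ultimately show ?thesis using 1 i(2) by (simp add: algebra_simps)
      next
        case 2 then show ?thesis using f z'_def by (auto simp: algebra_simps)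
      next
        case 3 then show ?thesis using f z'_def by (auto simp: algebra_simps)
      qed (auto simp: z'_def)
    qed
    have s2: "(\<Sum>l\<in>A. z' l * wr l + (if l = i then 2 * wr i else 0))
        = (\<Sum>l\<in>A. z l * wr l + ((if l = j i then wr (j i) else 0) + (if l = k i then wr (k i) else 0)))"
      using e2 by presburger
    have "(\<Sum>l\<in>A. z' l * wr l) + 2 * wr i = (\<Sum>l\<in>A. z l * wr l) + (wr (j i) + wr (k i))"
      using s2 i f fin unfolding sum.distrib by (simp add: if_distrib cong: if_cong)
    then have "(\<Sum>l\<in>A. z' l * wr l) < (\<Sum>l\<in>A. z l * wr l)" using wt[OF i(1)] by linarith
    from less[OF this] val show ?thesis by simp
  qed
qed

lemma wt_aux:
  fixes W T ei ep eo wp wo :: nat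
  assumes "W = 2*T" "1 \<le> ei" "ei \<le> T" "1 \<le> eo" "eo \<le> T" "ep \<le> T" "P \<or> 3*ei \<le> ep"
    "wp = (if P then 0 else W - ep)" "wo = (if Q then 0 else W - eo)"
  shows "wp + wo < 2*(W - ei)"
  using assms by (cases P; cases Q) auto

lemma order_bound:
  fixes y :: "'a::{ab_group_add,finite}"
  assumes "y \<noteq> 0" "nsm m y = 0" "m \<ge> 1"
  shows "smallest_prime_divisor (card (UNIV::'a set)) \<le> m \<and> smallest_prime_divisor (card (UNIV::'a set)) \<ge> 2"
proof -
  define N where "N = card (UNIV::'a set)"
  have N0: "N \<noteq> 0" unfolding N_def by simp
  have yN: "nsm N y = 0" unfolding N_def by (rule nsm_card)
  define g where "g = gcd m N"
  from bezout_nat[of m N] assms(3) obtain u v where uv: "m * u = N * v + g" unfolding g_def by auto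
  have "nsm (m * u) y = 0" by (metis mult.commute nsm_mult assms(2) nsm_zero)
  moreover have "nsm (N * v + g) y = nsm g y" by (metis mult.commute nsm_mult yN nsm_zero nsm_add add_0)
  ultimately have gy: "nsm g y = 0" using uv by simp
  have "g \<noteq> 1" using gy assms(1) by (metis One_nat_def add.right_neutral nsm.simps)
  then obtain q where q: "prime q" "q dvd g" using prime_factor_nat by blast
  have qN: "q dvd N" and qm: "q dvd m" using q g_def by auto
  have "q \<le> m" using qm assms(3) by (simp add: dvd_imp_le)
  have fin: "finite {p. prime p \<and> p dvd N}" using N0
    by (metis (no_types, lifting) finite_nat_set_iff_bounded_le mem_Collect_eq dvd_imp_le not_gr0)
  have qin: "q \<in> {p. prime p \<and> p dvd N}" using q qN by simp
  have "Min {p. prime p \<and> p dvd N} \<le> q" using Min_le[OF fin qin] .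
  moreover have "Min {p. prime p \<and> p dvd N} \<in> {p. prime p \<and> p dvd N}" using Min_in[OF fin] qin by blast
  ultimately show ?thesis using \<open>q \<le> m\<close> unfolding smallest_prime_divisor_def N_def[symmetric]
    by (auto simp: prime_ge_2_nat)
qed

lemma core:
  fixes B :: "'a::ab_group_add set"
  assumes finB: "finite B" and ne: "B \<noteq> {}" and bal: "balanced B"
  shows "\<exists>(y::'a) m. y \<noteq> 0 \<and> nsm m y = 0 \<and> 1 \<le> m \<and> m \<le> 2 ^ (card B - 1)"
proof -
  let ?P = "\<lambda>C. C \<subseteq> B \<and> C \<noteq> {} \<and> balanced C"
  obtain B' where B': "?P B'" and minB: "\<And>C. ?P C \<Longrightarrow> card B' \<le> card C"
    using ex_has_least_nat[of ?P B card] assms by blast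
  have finB': "finite B'" using B' finB finite_subset by blast
  obtain r where r: "r \<in> B'" using B' by blast
  have "\<forall>b\<in>B'. \<exists>p. fst p \<in> B' \<and> snd p \<in> B' \<and> fst p \<noteq> snd p \<and> b + b = fst p + snd p"
    using B' unfolding balanced_def by force
  then obtain f where f: "\<And>b. b \<in> B' \<Longrightarrow> fst (f b) \<in> B' \<and> snd (f b) \<in> B' \<and> fst (f b) \<noteq> snd (f b) \<and> b + b = fst (f b) + snd (f b)"
    by metis
  define j where "j b = fst (f b)" for b
  define k where "k b = snd (f b)" for b
  have jk: "j b \<in> B' \<and> k b \<in> B' \<and> j b \<noteq> k b \<and> j b \<noteq> b \<and> k b \<noteq> b \<and> b + b = j b + k b" if "b \<in> B'" for b
  proof -
    have h: "j b \<in> B'" "k b \<in> B'" "j b \<noteq> k b" "b + b = j b + k b" using f[OF that] j_def k_def by auto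
    have "j b \<noteq> b" using h(3,4) by (metis add_left_cancel)
    moreover have "k b \<noteq> b" using h(3,4) by (metis add_right_cancel)
    ultimately show ?thesis using h by blast
  qed
  define E where "E = {(a, b). a \<in> B' \<and> (b = j a \<or> b = k a)}"
  have reach: "(a, r) \<in> E\<^sup>*" if a: "a \<in> B'" for a
  proof (rule ccontr)
    assume na: "(a, r) \<notin> E\<^sup>*"
    define U where "U = {a \<in> B'. (a, r) \<notin> E\<^sup>*}"
    have cl: "j b \<in> U \<and> k b \<in> U" if "b \<in> U" for b
    proof -
      have b: "b \<in> B'" "(b, r) \<notin> E\<^sup>*" using that U_def by auto
      have "(b, j b) \<in> E" "(b, k b) \<in> E" using b E_def by auto
      then have "(j b, r) \<notin> E\<^sup>*" "(k b, r) \<notin> E\<^sup>*" using b(2) converse_rtrancl_into_rtrancl by metis+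
      then show ?thesis using jk[OF b(1)] U_def by auto
    qed
    have "balanced U" unfolding balanced_def
    proof
      fix b assume "b \<in> U"
      then show "\<exists>b1\<in>U. \<exists>b2\<in>U. b1 \<noteq> b2 \<and> b + b = b1 + b2"
        using cl jk U_def by blast
    qed
    moreover have "U \<subseteq> B" "U \<noteq> {}" using U_def B' a na by auto
    ultimately have c1: "card B' \<le> card U" using minB by blast
    have "r \<notin> U" using U_def by auto
    then have "U \<subset> B'" using U_def r by blast
    then have "card U < card B'" by (rule psubset_card_mono[OF finB'])
    then show False using c1 by linarith
  qed
  define \<rho> where "\<rho> a = (LEAST m. (a, r) \<in> E ^^ m)" for a
  have \<rho>1: "(a, r) \<in> E ^^ \<rho> a" if "a \<in> B'" for a
    using reach[OF that] unfolding \<rho>_def rtrancl_power by (metis LeastI)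
  have par: "\<rho> (j i) < \<rho> i \<or> \<rho> (k i) < \<rho> i" if i: "i \<in> B'" "i \<noteq> r" for i
  proof -
    have "\<rho> i \<noteq> 0" using \<rho>1[OF i(1)] i(2) by (metis relpow.simps(1) pair_in_Id_conv)
    then obtain n where n: "\<rho> i = Suc n" using not0_implies_Suc by blast
    then obtain c where c: "(i, c) \<in> E" "(c, r) \<in> E ^^ n" using \<rho>1[OF i(1)] relpow_Suc_D2 by metis
    have "\<rho> c \<le> n" unfolding \<rho>_def using c(2) by (rule Least_le)
    moreover have "c = j i \<or> c = k i" using c(1) E_def by auto
    ultimately show ?thesis using n by auto
  qed
  define K where "K = Max (\<rho> ` B')"
  have \<rho>K: "\<rho> a \<le> K" if "a \<in> B'" for a using that finB' K_def by simp
  define e where "e a = (3::nat) ^ (K - \<rho> a)" for a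
  define wr where "wr a = (if a = r then 0 else 2 * 3^K - e a)" for a
  have e1: "1 \<le> e a" for a unfolding e_def by simp
  have eK: "e a \<le> 3^K" for a unfolding e_def by (rule power_increasing) auto
  have e3: "3 * e a \<le> e b" if "\<rho> b < \<rho> a" "\<rho> a \<le> K" for a b
  proof -
    have "3 * e a = 3 ^ Suc (K - \<rho> a)" unfolding e_def by simp
    also have "\<dots> \<le> 3 ^ (K - \<rho> b)" by (rule power_increasing) (use that in auto)
    finally show ?thesis unfolding e_def .
  qed
  have wt: "wr (j i) + wr (k i) < 2 * wr i" if "i \<in> B' - {r}" for i
  proof -
    have i: "i \<in> B'" "i \<noteq> r" using that by auto
    have wi: "wr i = 2 * 3^K - e i" using i wr_def by simp
    from par[OF i] show ?thesis
    proof
      assume "\<rho> (j i) < \<rho> i"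
      then have pp: "j i = r \<or> 3 * e i \<le> e (j i)" using e3 \<rho>K[OF i(1)] by blast
      have "wr (j i) + wr (k i) < 2 * (2 * 3^K - e i)"
        by (rule wt_aux[where W="2*3^K" and T="3^K" and ei="e i" and ep="e (j i)" and eo="e (k i)"
             and P="j i = r" and Q="k i = r"]) (use pp e1 eK wr_def in auto)
      then show ?thesis using wi by (simp add: add.commute)
    next
      assume "\<rho> (k i) < \<rho> i"
      then have pp: "k i = r \<or> 3 * e i \<le> e (k i)" using e3 \<rho>K[OF i(1)] by blast
      have "wr (k i) + wr (j i) < 2 * (2 * 3^K - e i)"
        by (rule wt_aux[where W="2*3^K" and T="3^K" and ei="e i" and ep="e (k i)" and eo="e (j i)"
             and P="k i = r" and Q="j i = r"]) (use pp e1 eK wr_def in auto)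
      then show ?thesis using wi by (simp add: add.commute)
    qed
  qed
  define y where "y a = a - r" for a
  have fire: "j i \<in> B' \<and> k i \<in> B' \<and> j i \<noteq> k i \<and> j i \<noteq> i \<and> k i \<noteq> i \<and> y i + y i = y (j i) + y (k i)"
    if "i \<in> B' - {r}" for i
  proof -
    have h: "i + i = j i + k i" using jk that by blast
    have "y i + y i = (i + i) - (r + r)" unfolding y_def by (simp add: algebra_simps)
    also have "\<dots> = (j i + k i) - (r + r)" using h by simp
    also have "\<dots> = y (j i) + y (k i)" unfolding y_def by (simp add: algebra_simps)
    finally show ?thesis using jk that by blast
  qed
  define a where "a = j r"
  have aB: "a \<in> B'" and ar: "a \<noteq> r" using jk[OF r] a_def by auto
  define V where "V = (\<lambda>S. sum y S) ` Pow (B' - {r})"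
  have inV: "nsm t (y a) \<in> V" for t
  proof -
    have "(\<Sum>l\<in>B'. nsm ((\<lambda>l. if l = a then t else 0) l) (y l)) \<in> V"
      unfolding V_def by (rule stabilize[OF finB', of y r wr j k]) (use fire wt wr_def y_def in auto)
    moreover have "(\<Sum>l\<in>B'. nsm ((\<lambda>l. if l = a then t else 0) l) (y l)) = (\<Sum>l\<in>B'. if l = a then nsm t (y a) else 0)"
      by (rule sum.cong) auto
    ultimately show ?thesis using aB finB' by simp
  qed
  have finV: "finite V" unfolding V_def using finB' by simp
  have cardV: "card V \<le> 2 ^ (card B - 1)"
  proof -
    have "card V \<le> card (Pow (B' - {r}))" unfolding V_def by (rule card_image_le) (use finB' in simp)
    also have "\<dots> = 2 ^ (card B' - 1)" using finB' r by (simp add: card_Pow)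
    also have "\<dots> \<le> 2 ^ (card B - 1)"
    proof (rule power_increasing)
      have "card B' \<le> card B" using card_mono[OF finB] B' by blast
      then show "card B' - 1 \<le> card B - 1" by arith
    qed simp
    finally show ?thesis .
  qed
  have "\<not> inj_on (\<lambda>t. nsm t (y a)) {0..card V}"
  proof
    assume "inj_on (\<lambda>t. nsm t (y a)) {0..card V}"
    from card_inj_on_le[OF this _ finV] inV have "card {0..card V} \<le> card V" by blast
    then show False by simp
  qed
  then obtain s t where st: "s \<in> {0..card V}" "t \<in> {0..card V}" "s \<noteq> t" "nsm s (y a) = nsm t (y a)"
    unfolding inj_on_def by blast
  have "\<exists>s t. s < t \<and> t \<le> card V \<and> nsm s (y a) = nsm t (y a)"
  proof (cases "s < t")
    case True then show ?thesis using st by auto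
  next
    case False then have "t < s" using st(3) by simp
    then show ?thesis using st by (metis atLeastAtMost_iff)
  qed
  then obtain s t where st2: "s < t" "t \<le> card V" "nsm s (y a) = nsm t (y a)" by blast
  define m where "m = t - s"
  have "nsm t (y a) = nsm s (y a) + nsm m (y a)" using st2(1) m_def nsm_add by (metis le_add_diff_inverse less_imp_le)
  then have "nsm m (y a) = 0" using st2(3) by simp
  moreover have "y a \<noteq> 0" using ar y_def by simp
  moreover have "1 \<le> m" using st2(1) m_def by simp
  moreover have "m \<le> 2 ^ (card B - 1)" using st2(2) m_def cardV by simp
  ultimately have "y a \<noteq> 0 \<and> nsm m (y a) = 0 \<and> 1 \<le> m \<and> m \<le> 2 ^ (card B - 1)" by simp
  then show ?thesis by blast
qed

theorem corollary4p8:
  fixes B :: "'a::{ab_group_add, finite} set"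
  assumes "card (UNIV :: 'a set) > 1"
    and "B \<noteq> {}"
    and "balanced B"
  shows "real (card B) \<ge> log 2 (real (smallest_prime_divisor (card (UNIV :: 'a set)))) + 1"
proof -
  obtain y m where ym: "(y::'a) \<noteq> 0" "nsm m y = 0" "1 \<le> m" "m \<le> 2 ^ (card B - 1)"
    using core[OF finite[of B] assms(2,3)] by blast
  define s where "s = smallest_prime_divisor (card (UNIV :: 'a set))"
  have s: "s \<le> m" "2 \<le> s" using order_bound[OF ym(1-3)] s_def by auto
  have cB: "card B \<ge> 1" using assms(2) finite[of B] by (simp add: Suc_leI card_gt_0_iff)
  have "log 2 (real s) \<le> real (card B - 1)"
    using log2_of_power_le[of s "card B - 1"] s ym(4) by simp
  then show ?thesis unfolding s_def using cB by simp
qed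

end
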